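(* Consider the zooming algorithm on an instance of the Lipschitz MAB problem. In a clean phase, for any two distinct strategies $u,v$ that are active at some time $t$ of the phase, $L(u,v)>\tfrac14\min(\Delta(u),\Delta(v))$.
   Context: Lipschitz MAB problem on $(L,X)$ of diameter $\le1$: unknown $\mu:X\to[0,1]$ with $|\mu(x)-\mu(y)|\le L(x,y)$; playing $v$ yields an independent sample in $[0,1]$ of mean $\mu(v)$. $\mu^*=\sup_X\mu$, $\Delta(v)=\mu^*-\mu(v)$. Zooming algorithm: phases $i=1,2,\dots$ of $2^i$ rounds; within phase $i$, $n_t(v)$ = number of plays of $v$ in this phase before round $t$, $\mu_t(v)$ = their average reward ($0$ if none), $r_t(v)=\sqrt{8i/(2+n_t(v))}$, $I_t(v)=\mu_t(v)+2r_t(v)$; at phase start nothing is active; $u$ is covered at $t$ if $u\in B(v,r_t(v))$ (open ball) for some active $v$; in each round, if some strategy is uncovered one such is activated, then an active strategy of maximal index is played. Phase $i$ is clean if $|\mu_t(v)-\mu(v)|\le r_t(v)$ for every strategy $v$ played at least once in the phase and every round $t$ of the phase. *)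

theory Defs
  imports Complex_Main
begin

definition lipschitz_mab ::
  "'a set \<Rightarrow> ('a \<Rightarrow> 'a \<Rightarrow> real) \<Rightarrow> ('a \<Rightarrow> real) \<Rightarrow> bool" where
  "lipschitz_mab X L mu \<longleftrightarrow>
     X \<noteq> {} \<and>
     (\<forall>x\<in>X. \<forall>y\<in>X. 0 \<le> L x y \<and> L x y \<le> 1 \<and> (L x y = 0 \<longleftrightarrow> x = y) \<and> L x y = L y x) \<and>
     (\<forall>x\<in>X. \<forall>y\<in>X. \<forall>z\<in>X. L x z \<le> L x y + L y z) \<and>
     (\<forall>x\<in>X. 0 \<le> mu x \<and> mu x \<le> 1) \<and>
     (\<forall>x\<in>X. \<forall>y\<in>X. \<bar>mu x - mu y\<bar> \<le> L x y)"

definition mu_star :: "'a set \<Rightarrow> ('a \<Rightarrow> real) \<Rightarrow> real" where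
  "mu_star X mu = Sup (mu ` X)"

definition Delta :: "'a set \<Rightarrow> ('a \<Rightarrow> real) \<Rightarrow> 'a \<Rightarrow> real" where
  "Delta X mu v = mu_star X mu - mu v"

text \<open>A run of phase i is described by: act t (strategy activated in round t, if any),
  play t (strategy played in round t), rew t (reward observed in round t);
  rounds of the phase are t = 0, ..., 2^i - 1 (phase-local time).\<close>

definition n_cnt :: "(nat \<Rightarrow> 'a) \<Rightarrow> nat \<Rightarrow> 'a \<Rightarrow> nat" where
  "n_cnt play t v = card {s. s < t \<and> play s = v}"

definition avg_rew :: "(nat \<Rightarrow> 'a) \<Rightarrow> (nat \<Rightarrow> real) \<Rightarrow> nat \<Rightarrow> 'a \<Rightarrow> real" where
  "avg_rew play rew t v =
     (if n_cnt play t v = 0 then 0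
      else (\<Sum>s\<in>{s. s < t \<and> play s = v}. rew s) / real (n_cnt play t v))"

definition rad :: "nat \<Rightarrow> (nat \<Rightarrow> 'a) \<Rightarrow> nat \<Rightarrow> 'a \<Rightarrow> real" where
  "rad i play t v = sqrt (8 * real i / (2 + real (n_cnt play t v)))"

definition idx :: "nat \<Rightarrow> (nat \<Rightarrow> 'a) \<Rightarrow> (nat \<Rightarrow> real) \<Rightarrow> nat \<Rightarrow> 'a \<Rightarrow> real" where
  "idx i play rew t v = avg_rew play rew t v + 2 * rad i play t v"

definition active_before :: "(nat \<Rightarrow> 'a option) \<Rightarrow> nat \<Rightarrow> 'a set" where
  "active_before act t = {u. \<exists>s<t. act s = Some u}"

definition active_at :: "(nat \<Rightarrow> 'a option) \<Rightarrow> nat \<Rightarrow> 'a set" where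
  "active_at act t = active_before act t \<union> set_option (act t)"

definition covered ::
  "('a \<Rightarrow> 'a \<Rightarrow> real) \<Rightarrow> nat \<Rightarrow> (nat \<Rightarrow> 'a option) \<Rightarrow> (nat \<Rightarrow> 'a) \<Rightarrow> nat \<Rightarrow> 'a \<Rightarrow> bool" where
  "covered L i act play t u \<longleftrightarrow> (\<exists>v\<in>active_before act t. L v u < rad i play t v)"

definition zooming_phase ::
  "'a set \<Rightarrow> ('a \<Rightarrow> 'a \<Rightarrow> real) \<Rightarrow> nat \<Rightarrow> (nat \<Rightarrow> 'a option) \<Rightarrow> (nat \<Rightarrow> 'a) \<Rightarrow> (nat \<Rightarrow> real) \<Rightarrow> bool"
  where
  "zooming_phase X L i act play rew \<longleftrightarrow>
     (\<forall>t < 2 ^ i.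
        0 \<le> rew t \<and> rew t \<le> 1 \<and>
        (if (\<exists>u\<in>X. \<not> covered L i act play t u)
         then (\<exists>u. act t = Some u \<and> u \<in> X \<and> \<not> covered L i act play t u)
         else act t = None) \<and>
        play t \<in> active_at act t \<and>
        (\<forall>w\<in>active_at act t. idx i play rew t w \<le> idx i play rew t (play t)))"

definition clean_phase ::
  "('a \<Rightarrow> real) \<Rightarrow> nat \<Rightarrow> (nat \<Rightarrow> 'a) \<Rightarrow> (nat \<Rightarrow> real) \<Rightarrow> bool" where
  "clean_phase mu i play rew \<longleftrightarrow>
     (\<forall>v. (\<exists>s < 2 ^ i. play s = v) \<longrightarrow>
        (\<forall>t < 2 ^ i. \<bar>avg_rew play rew t v - mu v\<bar> \<le> rad i play t v))"

end

theory Submission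
  imports Defs
begin

lemma mabD:
  assumes "lipschitz_mab X L mu"
  shows "X \<noteq> {}"
    and "\<And>x. x \<in> X \<Longrightarrow> 0 \<le> mu x" and "\<And>x. x \<in> X \<Longrightarrow> mu x \<le> 1"
    and "\<And>x y. x \<in> X \<Longrightarrow> y \<in> X \<Longrightarrow> \<bar>mu x - mu y\<bar> \<le> L x y"
    and "\<And>x. x \<in> X \<Longrightarrow> L x x = 0"
    and "\<And>x y. x \<in> X \<Longrightarrow> y \<in> X \<Longrightarrow> L x y = L y x"
  using assms unfolding lipschitz_mab_def by blast+

lemma rad_pos: "1 \<le> i \<Longrightarrow> 0 < rad i play t v"
  unfolding rad_def by (intro real_sqrt_gt_zero divide_pos_pos) auto

lemma rad_zero: "1 \<le> i \<Longrightarrow> n_cnt play t v = 0 \<Longrightarrow> 2 \<le> rad i play t v"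
proof -
  assume "1 \<le> i" "n_cnt play t v = 0"
  then have "rad i play t v = sqrt (4 * real i)" unfolding rad_def by simp
  moreover have "2 \<le> sqrt (4 * real i)" using \<open>1 \<le> i\<close> by (intro real_le_rsqrt) simp
  ultimately show ?thesis by simp
qed

lemma zpD:
  assumes "zooming_phase X L i act play rew" "t < 2 ^ i"
  shows "(if (\<exists>u\<in>X. \<not> covered L i act play t u)
         then (\<exists>u. act t = Some u \<and> u \<in> X \<and> \<not> covered L i act play t u)
         else act t = None)"
    and "play t \<in> active_at act t"
    and "\<And>w. w\<in>active_at act t \<Longrightarrow> idx i play rew t w \<le> idx i play rew t (play t)"
proof -
  note h = assms(1)[unfolded zooming_phase_def, rule_format, OF assms(2)]
  show "(if (\<exists>u\<in>X. \<not> covered L i act play t u)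
         then (\<exists>u. act t = Some u \<and> u \<in> X \<and> \<not> covered L i act play t u)
         else act t = None)" using h by (elim conjE)
  show "play t \<in> active_at act t" using h by (elim conjE)
  fix w assume "w\<in>active_at act t"
  then show "idx i play rew t w \<le> idx i play rew t (play t)" using h by (elim conjE) blast
qed

lemma act_props:
  assumes "zooming_phase X L i act play rew" "s < 2 ^ i" "act s = Some a"
  shows "a \<in> X \<and> \<not> covered L i act play s a"
proof (cases "\<exists>u\<in>X. \<not> covered L i act play s u")
  case True
  have "\<exists>u. act s = Some u \<and> u \<in> X \<and> \<not> covered L i act play s u"
    using zpD(1)[OF assms(1,2)] by (subst (asm) if_P[OF True])
  then show ?thesis using assms(3) by auto
next
  case False
  have "act s = None" using zpD(1)[OF assms(1,2)] by (subst (asm) if_not_P[OF False])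
  then show ?thesis using assms(3) by simp
qed

lemma mab_facts:
  assumes "lipschitz_mab X L mu" "x \<in> X"
  shows "mu x \<le> mu_star X mu" "mu_star X mu \<le> 1" "Delta X mu x \<le> 1"
proof -
  have bdd: "bdd_above (mu ` X)" using mabD(3)[OF assms(1)] unfolding bdd_above_def by blast
  show 1: "mu x \<le> mu_star X mu" unfolding mu_star_def using bdd assms(2) by (simp add: cSup_upper)
  show 2: "mu_star X mu \<le> 1" unfolding mu_star_def using mabD(1,3)[OF assms(1)]
    by (intro cSup_least) auto
  show "Delta X mu x \<le> 1" unfolding Delta_def using 2 mabD(2)[OF assms] by auto
qed

lemma active_before_X:
  assumes "zooming_phase X L i act play rew" "t < 2 ^ i" "w \<in> active_before act t"
  shows "w \<in> X"
proof -
  obtain s where "s < t" "act s = Some w" using assms(3) unfolding active_before_def by blast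
  then show ?thesis using act_props[OF assms(1), of s w] assms(2) by simp
qed

lemma self_covered:
  assumes "1 \<le> i" "lipschitz_mab X L mu" "w \<in> X" "w \<in> active_before act t"
  shows "covered L i act play t w"
  using assms rad_pos[OF assms(1)] mabD(5)[OF assms(2,3)] unfolding covered_def by metis

lemma n_zero_not_active:
  assumes "zooming_phase X L i act play rew" "s < 2 ^ i" "a \<notin> active_before act s"
  shows "n_cnt play s a = 0"
proof -
  have "{s'. s' < s \<and> play s' = a} = {}"
  proof (rule ccontr)
    assume "{s'. s' < s \<and> play s' = a} \<noteq> {}"
    then obtain s' where s': "s' < s" "play s' = a" by auto
    then have "play s' \<in> active_at act s'" using zpD(2)[OF assms(1), of s'] assms(2) by simp
    then have "a \<in> active_before act s" using s' unfolding active_at_def active_before_def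
      by auto (metis order.strict_trans)
    then show False using assms by blast
  qed
  then show ?thesis unfolding n_cnt_def by simp
qed

lemma lemmaA:
  assumes mab: "lipschitz_mab X L mu" and i: "1 \<le> i"
    and z: "zooming_phase X L i act play rew"
    and c: "clean_phase mu i play rew"
    and s: "s < 2 ^ i" and u: "play s = u" and uX: "u \<in> X"
  shows "Delta X mu u \<le> 3 * rad i play s u"
proof -
  have idxmax: "\<And>w. w \<in> active_at act s \<Longrightarrow> idx i play rew s w \<le> idx i play rew s u"
    using zpD(3)[OF z s] u by simp
  have cu: "\<bar>avg_rew play rew s u - mu u\<bar> \<le> rad i play s u"
    using c s u unfolding clean_phase_def by auto
  have Iu: "idx i play rew s u \<le> mu u + 3 * rad i play s u"
    using cu unfolding idx_def by auto
  show ?thesis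
  proof (cases "\<exists>x\<in>X. \<not> covered L i act play s x")
    case True
    note h = zpD(1)[OF z s]
    then have "\<exists>u. act s = Some u \<and> u \<in> X \<and> \<not> covered L i act play s u"
      by (subst (asm) if_P[OF True])
    then obtain a where a: "act s = Some a" "\<not> covered L i act play s a" "a \<in> X"
      by blast
    have "a \<notin> active_before act s" using self_covered[OF i mab a(3)] a(2) by blast
    then have n0: "n_cnt play s a = 0" using n_zero_not_active[OF z s] by blast
    have "2 \<le> rad i play s a" using rad_zero[OF i n0] .
    then have "4 \<le> idx i play rew s a" unfolding idx_def avg_rew_def using n0 by simp
    moreover have "a \<in> active_at act s" using a unfolding active_at_def by simp
    ultimately have "4 \<le> mu u + 3 * rad i play s u" using idxmax Iu by force
    moreover have "mu u \<le> 1" using mabD(3)[OF mab uX] .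
    moreover have "Delta X mu u \<le> 1" using mab_facts[OF mab uX] by simp
    ultimately show ?thesis by linarith
  next
    case False
    have "mu_star X mu \<le> mu u + 3 * rad i play s u"
      unfolding mu_star_def
    proof (rule cSup_least)
      show "mu ` X \<noteq> {}" using mabD(1)[OF mab] by auto
    next
      fix y assume "y \<in> mu ` X"
      then obtain x where x: "x \<in> X" "y = mu x" by auto
      then obtain w where w: "w \<in> active_before act s" "L w x < rad i play s w"
        using False unfolding covered_def by auto
      have wX: "w \<in> X" using active_before_X[OF z s w(1)] .
      have "mu x \<le> mu w + L w x" using mabD(4)[OF mab wX x(1)] by linarith
      have "mu w + rad i play s w \<le> idx i play rew s w"
      proof (cases "n_cnt play s w = 0")
        case True
        have "2 \<le> rad i play s w" using rad_zero[OF i True] .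
        moreover have "mu w \<le> 1" using mabD(3)[OF mab wX] .
        ultimately show ?thesis unfolding idx_def avg_rew_def using True by simp
      next
        case False
        then have "{s'. s' < s \<and> play s' = w} \<noteq> {}" unfolding n_cnt_def by (metis card.empty)
        then obtain s' where "s' < s" "play s' = w" by auto
        then have "\<bar>avg_rew play rew s w - mu w\<bar> \<le> rad i play s w"
          using c s unfolding clean_phase_def by (metis order.strict_trans)
        then show ?thesis unfolding idx_def by auto
      qed
      moreover have "w \<in> active_at act s" using w(1) unfolding active_at_def by simp
      ultimately show "y \<le> mu u + 3 * rad i play s u"
        using idxmax Iu x \<open>mu x \<le> mu w + L w x\<close> w(2) by force
    qed
    then show ?thesis unfolding Delta_def by simp
  qed
qed

lemma rad_step:
  assumes "1 \<le> i" "n_cnt play s2 u = n_cnt play s1 u + 1"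
  shows "3 * rad i play s1 u < 4 * rad i play s2 u"
proof -
  define n where "n = real (n_cnt play s1 u)"
  have n: "n \<ge> 0" unfolding n_def by simp
  have r1: "rad i play s1 u = sqrt (8 * real i / (2 + n))" unfolding rad_def n_def by simp
  have r2: "rad i play s2 u = sqrt (8 * real i / (3 + n))" unfolding rad_def n_def using assms(2)
    by simp
  have ii: "real i \<ge> 1" using assms(1) by simp
  have "9 * (8 * real i / (2 + n)) < 16 * (8 * real i / (3 + n))"
  proof -
    have "0 < real i * 40 + n * (real i * 56)" using n ii by (intro add_pos_nonneg) auto
    then show ?thesis using n ii by (simp add: field_simps)
  qed
  then have A: "sqrt (9 * (8 * real i / (2 + n))) < sqrt (16 * (8 * real i / (3 + n)))"
    by (rule real_sqrt_less_mono)
  have s9: "sqrt 9 = 3" by (rule real_sqrt_unique) auto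
  have s16: "sqrt 16 = 4" by (rule real_sqrt_unique) auto
  have B: "sqrt (9 * (8 * real i / (2 + n))) = 3 * sqrt (8 * real i / (2 + n))"
    by (subst real_sqrt_mult) (simp only: s9)
  have C: "sqrt (16 * (8 * real i / (3 + n))) = 4 * sqrt (8 * real i / (3 + n))"
    by (subst real_sqrt_mult) (simp only: s16)
  show ?thesis unfolding r1 r2 using A unfolding B C .
qed

lemma one_side:
  assumes mab: "lipschitz_mab X L mu" and i: "1 \<le> i"
    and z: "zooming_phase X L i act play rew"
    and c: "clean_phase mu i play rew"
    and su: "act su = Some u" and sv: "act sv = Some v" and lt: "su < sv" and svi: "sv < 2 ^ i"
    and uv: "u \<noteq> v"
  shows "Delta X mu u < 4 * L u v"
proof -
  have uX: "u \<in> X" using act_props[OF z _ su] lt svi by simp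
  have "\<not> covered L i act play sv v" using act_props[OF z svi sv] by simp
  moreover have "u \<in> active_before act sv" using su lt unfolding active_before_def by auto
  ultimately have L: "rad i play sv u \<le> L u v" unfolding covered_def by (meson not_less)
  show ?thesis
  proof (cases "n_cnt play sv u = 0")
    case True
    have "2 \<le> rad i play sv u" using rad_zero[OF i True] .
    then show ?thesis using L mab_facts(3)[OF mab uX] by linarith
  next
    case False
    define S where "S = {s'. s' < sv \<and> play s' = u}"
    have fin: "finite S" unfolding S_def by auto
    have ne: "S \<noteq> {}" using False unfolding n_cnt_def S_def by (metis card.empty)
    define s where "s = Max S"
    have sS: "s \<in> S" unfolding s_def using fin ne by simp
    have smax: "\<And>x. x \<in> S \<Longrightarrow> x \<le> s" unfolding s_def using fin by simp
    have Seq: "S = insert s {s'. s' < s \<and> play s' = u}"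
      using sS smax unfolding S_def by fastforce
    have "s \<notin> {s'. s' < s \<and> play s' = u}" by simp
    have fin2: "finite {s'. s' < s \<and> play s' = u}" by simp
    have "card S = card {s'. s' < s \<and> play s' = u} + 1"
      using Seq fin2 \<open>s \<notin> {s'. s' < s \<and> play s' = u}\<close> by simp
    then have "n_cnt play sv u = n_cnt play s u + 1"
      unfolding n_cnt_def S_def by simp
    then have "3 * rad i play s u < 4 * rad i play sv u" by (rule rad_step[OF i])
    moreover have "Delta X mu u \<le> 3 * rad i play s u"
      using lemmaA[OF mab i z c _ _ uX] sS svi unfolding S_def by auto
    ultimately show ?thesis using L by linarith
  qed
qed

theorem mainTheorem10:
  fixes X :: "'a set" and L :: "'a \<Rightarrow> 'a \<Rightarrow> real" and mu :: "'a \<Rightarrow> real"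
    and i :: nat and act :: "nat \<Rightarrow> 'a option" and play :: "nat \<Rightarrow> 'a"
    and rew :: "nat \<Rightarrow> real" and t :: nat and u v :: 'a
  assumes "lipschitz_mab X L mu"
    and "1 \<le> i"
    and "zooming_phase X L i act play rew"
    and "clean_phase mu i play rew"
    and "t < 2 ^ i"
    and "u \<in> active_at act t" and "v \<in> active_at act t" and "u \<noteq> v"
  shows "L u v > 1/4 * min (Delta X mu u) (Delta X mu v)"
proof -
  obtain su where su: "su \<le> t" "act su = Some u"
    using assms(6) unfolding active_at_def active_before_def by (auto, meson less_imp_le)
  obtain sv where sv: "sv \<le> t" "act sv = Some v"
    using assms(7) unfolding active_at_def active_before_def by (auto, meson less_imp_le)
  have "su \<noteq> sv" using su sv assms(8) by auto
  then consider "su < sv" | "sv < su" by linarith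
  then show ?thesis
  proof cases
    case 1
    have "Delta X mu u < 4 * L u v"
      using one_side[OF assms(1-4) su(2) sv(2) 1 _ assms(8)] sv(1) assms(5) by simp
    then show ?thesis by linarith
  next
    case 2
    have "Delta X mu v < 4 * L v u"
      using one_side[OF assms(1-4) sv(2) su(2) 2 _ assms(8)[symmetric]] su(1) assms(5) by simp
    moreover have "L v u = L u v"
      using assms(1) act_props[OF assms(3) _ su(2)] act_props[OF assms(3) _ sv(2)] su(1) sv(1) assms(5)
      by (intro mabD(6)[OF assms(1)]) (auto intro: le_less_trans)
    ultimately show ?thesis by linarith
  qed
qed

end
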